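(* Let $W\subseteq\mathbb{H}$, let $x\in\mathbb{P}\mathbb{R}_+^d$ be a totally irrational direction, and let $M\in GL_{d+1}(\mathbb{Z})\cap M_{d+1}(\mathbb{N})$. If $W$ has non-empty interior for the topology $\mathcal{T}_x$, then $MW$ has non-empty interior for the topology $\mathcal{T}_{Mx}$.
   Context: $h(y)=\sum_iy_i$ on $\mathbb{R}^{d+1}$, $P=\{h=0\}$, $\mathbb{H}=\{z\in\mathbb{Z}^{d+1}:h(z)\ge0\}$. $\mathbb{P}\mathbb{R}_+^d$ is the set of positive directions, $v(x)$ the $\ell^1$-normalized representative, $Mx=[Mv(x)]$, $\pi_x(z)=z-h(z)v(x)$; $x$ is totally irrational if the coordinates of $v(x)$ are $\mathbb{Q}$-linearly independent. $\mathcal{T}_x$ is the topology on $\mathbb{H}$ whose open sets are $\pi_x^{-1}(U)\cap\mathbb{H}$ with $U\subseteq P$ open. *)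

theory Defs
  imports "HOL-Analysis.Analysis"
begin

text \<open>Ambient space R^{d+1} is modelled as real^'n for a finite index type 'n
  (so d+1 = CARD('n)); integer points are int^'n.\<close>

definition hsum :: "real^'n \<Rightarrow> real" where
  "hsum y = (\<Sum>i\<in>UNIV. y $ i)"

definition hsum_int :: "int^'n \<Rightarrow> int" where
  "hsum_int z = (\<Sum>i\<in>UNIV. z $ i)"

definition Pplane :: "(real^'n) set" where
  "Pplane = {y. hsum y = 0}"

definition Hset :: "(int^'n) set" where
  "Hset = {z. hsum_int z \<ge> 0}"

definition real_vec :: "int^'n \<Rightarrow> real^'n" where
  "real_vec z = (\<chi> i. of_int (z $ i))"

definition real_mat :: "int^'n^'n \<Rightarrow> real^'n^'n" where
  "real_mat M = (\<chi> i j. of_int (M $ i $ j))"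

text \<open>A point of the positive projective space is represented by its
  l1-normalised representative v(x): all coordinates positive, sum 1.\<close>
definition pos_dir :: "real^'n \<Rightarrow> bool" where
  "pos_dir v \<longleftrightarrow> (\<forall>i. v $ i > 0) \<and> hsum v = 1"

definition totally_irrational :: "real^'n \<Rightarrow> bool" where
  "totally_irrational v \<longleftrightarrow>
     (\<forall>q :: 'n \<Rightarrow> rat. (\<Sum>i\<in>UNIV. of_rat (q i) * v $ i) = 0 \<longrightarrow> (\<forall>i. q i = 0))"

definition act_dir :: "int^'n^'n \<Rightarrow> real^'n \<Rightarrow> real^'n" where
  "act_dir M v = (1 / hsum (real_mat M *v v)) *\<^sub>R (real_mat M *v v)"

definition proj :: "real^'n \<Rightarrow> int^'n \<Rightarrow> real^'n" where
  "proj v z = real_vec z - (of_int (hsum_int z)) *\<^sub>R v"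

definition Tx_open :: "real^'n \<Rightarrow> (int^'n) set \<Rightarrow> bool" where
  "Tx_open v S \<longleftrightarrow>
     (\<exists>U. openin (subtopology euclidean Pplane) U \<and> S = {z \<in> Hset. proj v z \<in> U})"

definition Tx :: "real^'n \<Rightarrow> (int^'n) topology" where
  "Tx v = topology (Tx_open v)"

definition GL_nat :: "int^'n^'n \<Rightarrow> bool" where
  "GL_nat M \<longleftrightarrow> (\<exists>N :: int^'n^'n. M ** N = mat 1 \<and> N ** M = mat 1)
                 \<and> (\<forall>i j. M $ i $ j \<ge> 0)"

end

theory Submission
  imports Defs "HOL-Analysis.Kronecker_Approximation_Theorem"
begin


lemma hsum_add[simp]: "hsum (x + y) = hsum x + hsum y"
  by (simp add: hsum_def sum.distrib)
lemma hsum_diff[simp]: "hsum (x - y) = hsum x - hsum y"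
  by (simp add: hsum_def sum_subtractf)
lemma hsum_scale[simp]: "hsum (a *\<^sub>R x) = a * hsum x"
  by (simp add: hsum_def sum_distrib_left)
lemma hsum_zero[simp]: "hsum 0 = 0"
  by (simp add: hsum_def)

lemma hsum_bounded: "\<bar>hsum x\<bar> \<le> real CARD('n) * norm (x::real^'n)"
proof -
  have "\<bar>hsum x\<bar> \<le> (\<Sum>i\<in>UNIV. \<bar>x$i\<bar>)" unfolding hsum_def by (rule sum_abs)
  also have "\<dots> \<le> (\<Sum>i\<in>(UNIV::'n set). norm x)"
    by (rule sum_mono) (simp add: component_le_norm_cart)
  finally show ?thesis by simp
qed

lemma hsum_int_real: "real_of_int (hsum_int z) = hsum (real_vec z)"
  by (simp add: hsum_int_def hsum_def real_vec_def)

lemma real_vec_mult: "real_vec (M *v z) = real_mat M *v real_vec z"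
  by (simp add: vec_eq_iff real_vec_def real_mat_def matrix_vector_mult_def)

lemma real_mat_mult: "real_mat (A ** B) = real_mat A ** real_mat B"
  by (simp add: vec_eq_iff real_mat_def matrix_matrix_mult_def)

lemma real_mat_one: "real_mat (mat 1) = mat 1"
  by (simp add: vec_eq_iff real_mat_def mat_def)

lemma real_vec_inj: "real_vec a = real_vec b \<Longrightarrow> a = b"
  by (simp add: vec_eq_iff real_vec_def)

definition pr :: "real^'n \<Rightarrow> real^'n \<Rightarrow> real^'n" where
  "pr v y = y - hsum y *\<^sub>R v"

lemma proj_pr: "proj v z = pr v (real_vec z)"
  by (simp add: proj_def pr_def hsum_int_real)

lemma pr_add: "pr v (x + y) = pr v x + pr v y"
  by (simp add: pr_def algebra_simps)
lemma pr_diff: "pr v (x - y) = pr v x - pr v y"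
  by (simp add: pr_def algebra_simps)
lemma pr_scale: "pr v (a *\<^sub>R x) = a *\<^sub>R pr v x"
  by (simp add: pr_def algebra_simps)

lemma hsum_pr: "hsum v = 1 \<Longrightarrow> hsum (pr v y) = 0"
  by (simp add: pr_def)

lemma pr_self: "hsum v = 1 \<Longrightarrow> pr v v = 0"
  by (simp add: pr_def)
lemma pr_P: "hsum y = 0 \<Longrightarrow> pr v y = y"
  by (simp add: pr_def)

lemma continuous_pr: "continuous_on S (pr v)"
  unfolding pr_def hsum_def
  by (intro continuous_intros)

lemma istop: "istopology (Tx_open v)"
  unfolding istopology_def
proof (intro conjI allI impI ballI)
  fix S T assume "Tx_open v S" "Tx_open v T"
  then obtain U1 U2 where "openin (subtopology euclidean Pplane) U1" "S = {z \<in> Hset. proj v z \<in> U1}"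
     "openin (subtopology euclidean Pplane) U2" "T = {z \<in> Hset. proj v z \<in> U2}"
    unfolding Tx_open_def by blast
  then show "Tx_open v (S \<inter> T)" unfolding Tx_open_def
    by (intro exI[of _ "U1 \<inter> U2"]) auto
next
  fix K assume K: "\<forall>S\<in>K. Tx_open v S"
  then have "\<forall>S\<in>K. \<exists>U. openin (subtopology euclidean Pplane) U \<and> S = {z \<in> Hset. proj v z \<in> U}"
    unfolding Tx_open_def by blast
  then obtain F where F: "\<And>S. S\<in>K \<Longrightarrow> openin (subtopology euclidean Pplane) (F S) \<and> S = {z \<in> Hset. proj v z \<in> F S}"
    by metis
  show "Tx_open v (\<Union>K)" unfolding Tx_open_def
  proof (intro exI[of _ "\<Union>(F ` K)"] conjI)
    show "openin (subtopology euclidean Pplane) (\<Union>(F ` K))" using F by blast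
    show "\<Union>K = {z \<in> Hset. proj v z \<in> \<Union>(F ` K)}"
    proof
      show "\<Union>K \<subseteq> {z \<in> Hset. proj v z \<in> \<Union>(F ` K)}" using F by blast
      show "{z \<in> Hset. proj v z \<in> \<Union>(F ` K)} \<subseteq> \<Union>K" using F by blast
    qed
  qed
qed

lemma openin_Tx: "openin (Tx v) S \<longleftrightarrow> Tx_open v S"
  unfolding Tx_def using topology_inverse'[OF istop[of v]] by simp

lemma finite_box: "finite {z::int^'n. \<forall>i. \<bar>z$i\<bar> \<le> B}"
proof -
  have "finite (Pi UNIV (\<lambda>_::'n. {-B..B}))"
    using finite_PiE[of "UNIV::'n set" "\<lambda>_. {-B..B}"] by (simp add: PiE_UNIV_domain)
  then have "finite (vec_nth -` Pi UNIV (\<lambda>_::'n. {-B..B}))"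
    by (rule finite_vimageI) (simp add: inj_def vec_eq_iff)
  moreover have "{z::int^'n. \<forall>i. \<bar>z$i\<bar> \<le> B} \<subseteq> vec_nth -` Pi UNIV (\<lambda>_::'n. {-B..B})"
    by (force simp: abs_le_iff)
  ultimately show ?thesis by (rule finite_subset[rotated])
qed



lemma dirichlet_vec:
  fixes v :: "real^'n" and N :: nat
  assumes hv: "hsum v = 1" and NK: "CARD('n) < N"
  obtains a :: "int^'n" where "hsum_int a > 0"
    "\<And>i. \<bar>real_vec a $ i - of_int (hsum_int a) * v$i\<bar> < 1 / real N"
proof -
  define k where "k = CARD('n)"
  obtain f where f: "bij_betw f {0..<k} (UNIV::'n set)"
    using ex_bij_betw_nat_finite[of "UNIV::'n set"] unfolding k_def by auto
  have N0: "N > 0" using NK by simp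
  obtain q p where q: "0 < q" and qp: "\<And>i. i<k \<Longrightarrow> \<bar>of_int q * v $ f i - of_int(p i)\<bar> < 1/N"
    using Dirichlet_approx_simult[OF N0, where \<theta>="\<lambda>i. v $ f i" and n=k] by blast
  define g where "g = inv_into {0..<k} f"
  have jim: "j \<in> f ` {0..<k}" for j using f unfolding bij_betw_def by simp
  have g: "g j < k" "f (g j) = j" for j
    using inv_into_into[OF jim[of j]] f_inv_into_f[OF jim[of j]] unfolding g_def by auto
  define a :: "int^'n" where "a = (\<chi> j. p (g j))"
  have ai: "\<bar>real_vec a $ j - of_int q * v$j\<bar> < 1/N" for j
    using qp[OF g(1)[of j]] unfolding g(2) by (simp add: a_def real_vec_def abs_minus_commute)
  have "\<bar>hsum (real_vec a) - of_int q\<bar> = \<bar>\<Sum>j\<in>UNIV. (real_vec a $ j - of_int q * v$j)\<bar>"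
    using hv by (simp add: hsum_def sum_subtractf sum_distrib_left[symmetric])
  also have "\<dots> \<le> (\<Sum>j\<in>UNIV. \<bar>real_vec a $ j - of_int q * v$j\<bar>)" by (rule sum_abs)
  also have "\<dots> < (\<Sum>j\<in>(UNIV::'n set). 1/N)"
    by (rule sum_strict_mono) (use ai in auto)
  also have "\<dots> = k / N" by (simp add: k_def)
  also have "\<dots> < 1" using NK by (simp add: k_def)
  finally have "\<bar>of_int (hsum_int a) - of_int q\<bar> < (1::real)" by (simp add: hsum_int_real)
  then have "\<bar>hsum_int a - q\<bar> < 1" by linarith
  then have eq: "hsum_int a = q" by linarith
  show ?thesis
    by (rule that) (use q eq ai in auto)
qed

lemma rat_case:
  fixes v y :: "real^'n" and z z' :: "int^'n"
  assumes pv: "pos_dir v" and ti: "totally_irrational v"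
    and eq: "proj v z = proj v z'" and ne: "hsum_int z \<noteq> hsum_int z'"
    and y: "hsum y = 0"
  shows "y = 0"
proof -
  define t where "t = hsum_int z' - hsum_int z"
  have t0: "t \<noteq> 0" using ne by (simp add: t_def)
  have "real_vec z' - real_vec z = of_int t *\<^sub>R v"
    using eq by (simp add: proj_def t_def algebra_simps)
  then have "v $ i = real_of_int (z'$i - z$i) / real_of_int t" for i
    using t0 by (auto simp: vec_eq_iff real_vec_def field_simps)
  then have vi: "v $ i = of_rat (of_int (z'$i - z$i) / of_int t)" for i
    by (metis of_rat_divide of_rat_of_int_eq)
  define qv where "qv i = (of_int (z'$i - z$i) / of_int t :: rat)" for i
  have vq: "v $ i = of_rat (qv i)" for i using vi qv_def by simp
  have all_eq: "i = j" for i j :: 'n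
  proof (rule ccontr)
    assume ij: "i \<noteq> j"
    define q where "q k = (if k = i then qv j else 0) - (if k = j then qv i else 0)" for k
    have "(\<Sum>k\<in>UNIV. of_rat (q k) * v $ k) =
       (\<Sum>k\<in>UNIV. (if k = i then of_rat (qv j) * v $ k else 0) - (if k = j then of_rat (qv i) * v $ k else 0))"
      by (rule sum.cong) (auto simp: q_def of_rat_diff)
    also have "\<dots> = (\<Sum>k\<in>UNIV. (if k = i then of_rat (qv j) * v $ k else 0)) - (\<Sum>k\<in>UNIV. (if k = j then of_rat (qv i) * v $ k else 0))"
      by (rule sum_subtractf)
    also have "\<dots> = of_rat (qv j) * v $ i - of_rat (qv i) * v $ j"
      by simp
    also have "\<dots> = 0" by (simp add: vq)
    finally have "q i = 0" using ti unfolding totally_irrational_def by blast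
    then have "qv j = 0" using ij by (simp add: q_def)
    then have "v $ j = 0" using vq by simp
    then show False using pv unfolding pos_dir_def by (metis less_irrefl)
  qed
  have U: "UNIV = {i}" for i :: 'n using all_eq by auto
  have "y $ i = 0" for i :: 'n using y unfolding hsum_def U[of i] by simp
  then show ?thesis by (simp add: vec_eq_iff)
qed



theorem lemma3p17:
  fixes W :: "(int^'n) set" and v :: "real^'n" and M :: "int^'n^'n"
  assumes "W \<subseteq> Hset"
    and "pos_dir v" and "totally_irrational v"
    and "GL_nat M"
    and "(Tx v) interior_of W \<noteq> {}"
  shows "(Tx (act_dir M v)) interior_of ((\<lambda>z. M *v z) ` W) \<noteq> {}"
proof -
  obtain Ninv where MN: "M ** Ninv = mat 1" and NM: "Ninv ** M = mat 1" and Mpos: "\<And>i j. M$i$j \<ge> 0"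
    using assms(4) unfolding GL_nat_def by blast
  define R where "R = real_mat M"
  define Ri where "Ri = real_mat Ninv"
  have RiR: "Ri ** R = mat 1" using NM real_mat_mult real_mat_one unfolding R_def Ri_def by metis
  have hv: "hsum v = 1" and vpos: "\<And>i. v$i > 0" using assms(2) unfolding pos_dir_def by auto
  define c where "c = hsum (R *v v)"
  have c0: "c > 0"
  proof -
    have "M \<noteq> 0"
    proof
      assume "M = 0"
      then have "(mat 1 :: int^'n^'n) = 0" using MN by simp
      then have "(mat 1 :: int^'n^'n) $ undefined $ undefined = 0" by simp
      then show False by (simp add: mat_def)
    qed
    then obtain i j where ij: "M$i$j \<noteq> 0" by (auto simp: vec_eq_iff)
    then have Mij: "M$i$j > 0" using Mpos[of i j] by simp
    have c_eq: "c = (\<Sum>i'\<in>UNIV. \<Sum>j'\<in>UNIV. of_int (M$i'$j') * v$j')"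
      by (simp add: c_def hsum_def matrix_vector_mult_def R_def real_mat_def)
    have nn: "0 \<le> of_int (M$i'$j') * v$j'" for i' j'
      using Mpos[of i' j'] vpos[of j'] by simp
    have "0 < of_int (M$i$j) * v$j" using Mij vpos[of j] by simp
    also have "\<dots> \<le> (\<Sum>j'\<in>UNIV. of_int (M$i$j') * v$j')"
      by (rule member_le_sum) (auto intro: nn)
    also have "\<dots> \<le> (\<Sum>i'\<in>UNIV. \<Sum>j'\<in>UNIV. of_int (M$i'$j') * v$j')"
      by (rule member_le_sum) (auto intro: nn sum_nonneg)
    finally show ?thesis using c_eq by simp
  qed
  define w where "w = act_dir M v"
  have w_eq: "w = (1/c) *\<^sub>R (R *v v)" by (simp add: w_def act_dir_def R_def c_def)
  have hw: "hsum w = 1" using c0 by (simp add: w_eq c_def)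
  have Riw: "Ri *v w = (1/c) *\<^sub>R v"
    by (simp add: w_eq matrix_vector_mult_scaleR matrix_vector_mul_assoc RiR)
  define G where "G y = pr v (Ri *v y)" for y
  have key1: "G (proj w (M *v z)) = proj v z" for z
  proof -
    have "G (proj w (M *v z)) = pr v (Ri *v (R *v real_vec z) - hsum (R *v real_vec z) *\<^sub>R (Ri *v w))"
      by (simp add: G_def proj_pr pr_def real_vec_mult R_def matrix_vector_mult_diff_distrib matrix_vector_mult_scaleR)
    also have "\<dots> = pr v (real_vec z) - (hsum (R *v real_vec z) / c) *\<^sub>R pr v v"
      by (simp add: Riw matrix_vector_mul_assoc RiR pr_diff pr_scale)
    also have "\<dots> = proj v z" by (simp add: pr_self[OF hv] proj_pr)
    finally show ?thesis .
  qed
  have key2: "real_of_int (hsum_int (M *v z)) = hsum (R *v proj v z) + real_of_int (hsum_int z) * c" for z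
  proof -
    have "real_vec z = proj v z + real_of_int (hsum_int z) *\<^sub>R v" by (simp add: proj_def)
    then have "R *v real_vec z = R *v proj v z + real_of_int (hsum_int z) *\<^sub>R (R *v v)"
      by (metis matrix_vector_right_distrib matrix_vector_mult_scaleR)
    then show ?thesis by (simp add: hsum_int_real real_vec_mult R_def c_def)
  qed
  have projP: "hsum (proj u z) = 0" if "hsum u = 1" for u z
    by (simp add: proj_pr hsum_pr that)
  from assms(5) obtain S z0 where S: "openin (Tx v) S" "z0 \<in> S" "S \<subseteq> W"
    unfolding interior_of_def by auto
  then obtain U where U: "openin (subtopology euclidean Pplane) U" and SU: "S = {z\<in>Hset. proj v z \<in> U}"
    using openin_Tx unfolding Tx_open_def by blast
  then obtain Oo where O: "open Oo" "U = Pplane \<inter> Oo" using openin_open by blast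
  define p0 where "p0 = proj v z0"
  have "p0 \<in> Oo" using S(2) SU O(2) p0_def by blast
  then obtain e where e: "e > 0" "ball p0 e \<subseteq> Oo" using O(1) open_contains_ball by blast
  have inW: "z \<in> W" if "z \<in> Hset" "dist p0 (proj v z) < e" for z
  proof -
    have "proj v z \<in> U" using that e O(2) projP[OF hv, of z] by (auto simp: Pplane_def)
    then show ?thesis using that S SU by blast
  qed
  obtain Bd where Bd: "Bd > 0" "\<And>x. norm (R *v x) \<le> norm x * Bd"
    using bounded_linear.pos_bounded[OF matrix_vector_mul_bounded_linear[of R]] by blast
  define k where "k = real CARD('n)"
  have k1: "k \<ge> 1" unfolding k_def by (simp add: Suc_le_eq)
  define C where "C = k * Bd"
  have C0: "C > 0" using k1 Bd by (simp add: C_def)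
  have hR: "\<bar>hsum (R *v x)\<bar> \<le> C * norm x" for x
  proof -
    have "\<bar>hsum (R *v x)\<bar> \<le> k * norm (R *v x)" using hsum_bounded[of "R *v x"] by (simp add: k_def)
    also have "\<dots> \<le> k * (norm x * Bd)" using Bd(2)[of x] k1 by (simp add: mult_left_mono)
    finally show ?thesis by (simp add: C_def algebra_simps)
  qed
  obtain z1 where z1H: "z1 \<in> Hset" and z1M: "hsum_int (M *v z1) \<ge> 0" and z1d: "dist p0 (proj v z1) < e"
  proof -
    define A0 where "A0 = hsum (R *v real_vec z0)"
    define j :: nat where "j = nat \<lceil>2*\<bar>A0\<bar>/c\<rceil> + 1"
    have "real j \<ge> 2*\<bar>A0\<bar>/c" unfolding j_def by linarith
    then have jA: "real j * c / 2 \<ge> \<bar>A0\<bar>" using c0 by (simp add: field_simps)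
    obtain Nn :: nat where Nn: "max k (max (real j * k / e) (2 * C * k / c)) < real Nn"
      using reals_Archimedean2 by blast
    have NnK: "CARD('n) < Nn" using Nn by (simp add: k_def)
    have Nn0: "real Nn > 0" using Nn k1 by linarith
    obtain a where a: "hsum_int a > 0" "\<And>i. \<bar>real_vec a $ i - of_int (hsum_int a) * v$i\<bar> < 1 / real Nn"
      using dirichlet_vec[OF hv NnK] by blast
    define q where "q = hsum_int a"
    define ra where "ra = pr v (real_vec a)"
    have ra_eq: "ra = real_vec a - real_of_int q *\<^sub>R v" by (simp add: ra_def pr_def q_def hsum_int_real)
    have "norm ra \<le> (\<Sum>i\<in>UNIV. \<bar>ra$i\<bar>)" by (rule norm_le_l1_cart)
    also have "\<dots> \<le> (\<Sum>i\<in>(UNIV::'n set). 1 / real Nn)"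
      by (rule sum_mono) (use a(2) in \<open>auto simp: ra_eq q_def less_imp_le\<close>)
    also have "\<dots> = k / real Nn" by (simp add: k_def)
    finally have nra: "norm ra \<le> k / real Nn" .
    define z1 where "z1 = (\<chi> i. z0$i + int j * a$i)"
    have rz1: "real_vec z1 = real_vec z0 + real j *\<^sub>R real_vec a"
      by (simp add: vec_eq_iff real_vec_def z1_def)
    have pz1: "proj v z1 = p0 + real j *\<^sub>R ra"
      by (simp add: proj_pr rz1 pr_add pr_scale p0_def ra_def)
    have "real j * k / e < real Nn" using Nn by simp
    then have "real j * k < real Nn * e" using e(1) by (simp add: pos_divide_less_eq)
    then have jk: "real j * k / real Nn < e" using Nn0 by (simp add: pos_divide_less_eq mult.commute)
    have "dist p0 (proj v z1) = real j * norm ra" by (simp add: pz1 dist_norm)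
    also have "\<dots> \<le> real j * (k / real Nn)" using mult_left_mono[OF nra, of "real j"] by simp
    finally have d1: "dist p0 (proj v z1) < e" using jk by simp
    have "hsum_int z1 = hsum_int z0 + int j * q"
      by (simp add: hsum_int_def z1_def q_def sum.distrib sum_distrib_left)
    moreover have "hsum_int z0 \<ge> 0" using S SU by (auto simp: Hset_def)
    ultimately have h1: "z1 \<in> Hset" using a(1) by (simp add: Hset_def q_def)
    have "2 * C * k / c < real Nn" using Nn by simp
    then have "2 * C * k < real Nn * c" using c0 by (simp add: pos_divide_less_eq)
    then have Ck: "C * (k / real Nn) \<le> c / 2" using Nn0 by (simp add: field_simps)
    have "real_vec a = ra + real_of_int q *\<^sub>R v" using ra_eq by simp
    then have "R *v real_vec a = R *v ra + real_of_int q *\<^sub>R (R *v v)"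
      by (metis matrix_vector_right_distrib matrix_vector_mult_scaleR)
    then have ha: "hsum (R *v real_vec a) = hsum (R *v ra) + real_of_int q * c" by (simp add: c_def)
    have "\<bar>hsum (R *v ra)\<bar> \<le> C * (k / real Nn)"
      using hR[of ra] nra C0 by (meson mult_left_mono less_imp_le order_trans)
    moreover have "real_of_int q * c \<ge> c" using a(1) c0 by (simp add: q_def)
    ultimately have haa: "hsum (R *v real_vec a) \<ge> c / 2" using ha Ck by linarith
    have "real_of_int (hsum_int (M *v z1)) = A0 + real j * hsum (R *v real_vec a)"
      by (simp add: hsum_int_real real_vec_mult rz1 A0_def R_def matrix_vector_right_distrib matrix_vector_mult_scaleR)
    also have "\<dots> \<ge> A0 + real j * (c / 2)" using mult_left_mono[OF haa, of "real j"] by simp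
    finally have "real_of_int (hsum_int (M *v z1)) \<ge> 0" using jA by linarith
    then have m1: "hsum_int (M *v z1) \<ge> 0" by simp
    show ?thesis by (rule that[OF h1 m1 d1])
  qed
  define p1 where "p1 = proj v z1"
  define d where "d = e - dist p0 p1"
  have d0: "d > 0" using z1d by (simp add: d_def p1_def)
  have hp1: "hsum p1 = 0" using projP[OF hv] by (simp add: p1_def)
  define K where "K = (\<bar>hsum (R *v p1)\<bar> + C) / c"
  define Bz where "Bz = \<lceil>norm p1 + 1 + K * norm v\<rceil>"
  define F where "F = {z::int^'n. \<forall>i. \<bar>z$i\<bar> \<le> Bz} \<inter>
     {z. hsum_int z < 0 \<and> hsum_int (M *v z) \<ge> 0 \<and> dist p1 (proj v z) < 1}"
  have finF: "finite F" unfolding F_def using finite_box by blast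
  have bound: "\<forall>i. \<bar>z$i\<bar> \<le> Bz"
    if z: "hsum_int z < 0" "hsum_int (M *v z) \<ge> 0" "dist p1 (proj v z) < 1" for z
  proof
    fix i
    define pz where "pz = proj v z"
    define hz where "hz = real_of_int (hsum_int z)"
    have "hsum (R *v pz) + hz * c \<ge> 0" using key2[of z] z(2) by (simp add: pz_def hz_def)
    moreover have "hsum (R *v pz) \<le> \<bar>hsum (R *v p1)\<bar> + C"
    proof -
      have "hsum (R *v pz) = hsum (R *v p1) + hsum (R *v (pz - p1))"
        by (simp add: matrix_vector_mult_diff_distrib)
      moreover have "\<bar>hsum (R *v (pz - p1))\<bar> \<le> C * norm (pz - p1)" by (rule hR)
      moreover have "norm (pz - p1) \<le> 1" using z(3) by (simp add: pz_def dist_norm norm_minus_commute)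
      moreover have "C * norm (pz - p1) \<le> C * 1"
        using mult_left_mono[OF calculation(3), of C] C0 by simp
      ultimately show ?thesis by linarith
    qed
    ultimately have "hz * c \<ge> - (K * c)" using c0 by (simp add: K_def)
    then have "(-K) * c \<le> hz * c" by simp
    then have "hz \<ge> -K" using c0 by (metis mult_le_cancel_right_pos)
    moreover have "hz < 0" using z(1) by (simp add: hz_def)
    ultimately have ahz: "\<bar>hz\<bar> \<le> K" by linarith
    have rz: "real_vec z = pz + hz *\<^sub>R v" by (simp add: proj_def pz_def hz_def)
    have "\<bar>real_of_int (z$i)\<bar> = \<bar>real_vec z $ i\<bar>" by (simp add: real_vec_def)
    also have "\<dots> \<le> norm (real_vec z)" by (rule component_le_norm_cart)
    also have "\<dots> \<le> norm pz + \<bar>hz\<bar> * norm v" unfolding rz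
      using norm_triangle_ineq[of pz "hz *\<^sub>R v"] by simp
    also have "\<dots> \<le> norm p1 + 1 + K * norm v"
    proof -
      have "norm pz \<le> norm p1 + norm (pz - p1)" using norm_triangle_ineq[of p1 "pz - p1"] by simp
      moreover have "norm (pz - p1) \<le> 1" using z(3) by (simp add: pz_def dist_norm norm_minus_commute)
      moreover have "\<bar>hz\<bar> * norm v \<le> K * norm v" using ahz by (simp add: mult_right_mono)
      ultimately show ?thesis by linarith
    qed
    also have "\<dots> \<le> real_of_int Bz" unfolding Bz_def by linarith
    finally show "\<bar>z$i\<bar> \<le> Bz" by linarith
  qed
  have Fne: "proj v z \<noteq> p1" if zF: "z \<in> F" for z
  proof
    assume eq: "proj v z = p1"
    have "hsum_int z \<noteq> hsum_int z1" using zF z1H by (auto simp: F_def Hset_def)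
    then have "p1 = 0" using rat_case[OF assms(2) assms(3), of z z1 p1] eq hp1 by (simp add: p1_def)
    then have "real_of_int (hsum_int (M *v z)) = real_of_int (hsum_int z) * c"
      using key2[of z] eq by simp
    moreover have "hsum_int z < 0" "hsum_int (M *v z) \<ge> 0" using zF by (auto simp: F_def)
    moreover have "real_of_int (hsum_int z) * c < 0"
      using mult_neg_pos[of "real_of_int (hsum_int z)" c] c0 calculation(2) by simp
    ultimately show False by linarith
  qed
  define \<delta> where "\<delta> = Min (insert 1 ((\<lambda>z. dist p1 (proj v z)) ` F))"
  have \<delta>0: "\<delta> > 0" unfolding \<delta>_def using finF Fne by (auto simp: Min_gr_iff)
  have \<delta>1: "\<delta> \<le> 1" unfolding \<delta>_def using finF by simp
  have \<delta>F: "\<delta> \<le> dist p1 (proj v z)" if "z \<in> F" for z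
    unfolding \<delta>_def using finF that by simp
  define r where "r = min \<delta> d"
  have r0: "r > 0" using \<delta>0 d0 by (simp add: r_def)
  have goodH: "z \<in> Hset" if "hsum_int (M *v z) \<ge> 0" "dist p1 (proj v z) < r" for z
  proof (rule ccontr)
    assume "z \<notin> Hset"
    then have hz: "hsum_int z < 0" by (simp add: Hset_def)
    have d1: "dist p1 (proj v z) < 1" using that \<delta>1 by (simp add: r_def)
    have "z \<in> F" using bound[OF hz that(1) d1] hz that(1) d1 by (simp add: F_def)
    then have "\<delta> \<le> dist p1 (proj v z)" by (rule \<delta>F)
    then show False using that(2) by (simp add: r_def)
  qed
  define V where "V = Pplane \<inter> G -` ball p1 r"
  have contG: "continuous_on UNIV G"
    unfolding G_def pr_def hsum_def
    by (intro continuous_intros linear_continuous_on[OF matrix_vector_mul_bounded_linear])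
  have "open (G -` ball p1 r)" by (rule open_vimage[OF open_ball contG])
  then have Vopen: "openin (subtopology euclidean Pplane) V" unfolding V_def
    using openin_open by blast
  define T' where "T' = {y \<in> Hset. proj w y \<in> V}"
  have T'open: "openin (Tx w) T'" unfolding openin_Tx Tx_open_def T'_def using Vopen by blast
  have y1: "M *v z1 \<in> T'"
    using z1M r0 projP[OF hw, of "M *v z1"] key1[of z1]
    by (simp add: T'_def Hset_def V_def Pplane_def p1_def)
  have T'sub: "T' \<subseteq> (\<lambda>z. M *v z) ` W"
  proof
    fix y assume y: "y \<in> T'"
    define z where "z = Ninv *v y"
    have Mz: "M *v z = y" by (simp add: z_def matrix_vector_mul_assoc MN)
    have pz: "dist p1 (proj v z) < r" using y key1[of z] Mz by (simp add: T'_def V_def dist_commute)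
    have hMz: "hsum_int (M *v z) \<ge> 0" using y Mz by (simp add: T'_def Hset_def)
    have zH: "z \<in> Hset" by (rule goodH[OF hMz pz])
    have "dist p0 (proj v z) \<le> dist p0 p1 + dist p1 (proj v z)" by (rule dist_triangle)
    also have "\<dots> < e" using pz by (simp add: r_def d_def)
    finally have "z \<in> W" using inW zH by blast
    then show "y \<in> (\<lambda>z. M *v z) ` W" using Mz by blast
  qed
  have "M *v z1 \<in> (Tx w) interior_of ((\<lambda>z. M *v z) ` W)"
    unfolding interior_of_def using T'open y1 T'sub by blast
  then show ?thesis by (auto simp: w_def)
qed
end
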